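(* Define $\sigma:\mathbb N\to\mathbb N$ by $$\sigma(n)=\begin{cases}\lfloor(\varphi+1) n-2\rfloor, & n\in R_{1,0},\\ \lfloor\varphi n+2\rfloor, & n\in R_{3,1},\\ \lfloor(\varphi-1) n+2\rfloor, & n\in R_{2,2},\\ \lfloor(\varphi-1) n\rfloor, & n\in R_{2,0}.\end{cases}$$ Then $\sigma$ is an $R_{i,j}$-permutation of $\mathbb N$ of order $6$ (first values $2,3,1,8,11,5,16,4,7,24,\dots$), and its powers are the $R_{i,j}$-permutations $$\sigma^2(n)=\begin{cases}\lfloor\varphi n+2\rfloor, & n\in R_{2,2},\\ \lfloor\varphi n-2\rfloor, & n\in R_{1,0},\\ n, & n\in R_{4,0}\cup R_{3,1},\\ \lfloor(2-\varphi)n+1\rfloor, & n\in R_{3,2},\end{cases}\qquad \sigma^3(n)=\begin{cases}\lfloor\varphi n+2\rfloor, & n\in R_{3,1},\\ \lfloor(\varphi-1)n\rfloor, & n\in R_{4,0},\\ n, & n\in R_{3,2}\cup R_{2,2}\cup R_{1,0},\end{cases}$$ $$\sigma^4(n)=\begin{cases}\lfloor(\varphi+1)n-2\rfloor, & n\in R_{1,0},\\ \lfloor(\varphi-1)n+2\rfloor, & n\in R_{2,2},\\ \lfloor(\varphi-1)n\rfloor, & n\in R_{3,2},\\ n, & n\in R_{4,0}\cup R_{3,1},\end{cases}\qquad \sigma^5(n)=\sigma^{-1}(n)=\begin{cases}\lfloor\varphi n+2\rfloor, & n\in R_{1,1},\\ \lfloor\varphi n-2\rfloor, & n\in R_{1,0},\\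 \lfloor(\varphi-1)n\rfloor, & n\in R_{4,0},\\ \lfloor(2-\varphi)n+1\rfloor, & n\in R_{3,2}.\end{cases}$$
   Context: $\mathbb N=\{1,2,\dots\}$, $\varphi=\frac{1+\sqrt5}{2}$, $F$ the Fibonacci numbers ($F(0)=0,F(1)=F(2)=1$). For $i\in\mathbb Z^{\ge0},j\in\mathbb Z$, $R_{i,j}$ is the range of $n\mapsto F(i+1)\lfloor n\varphi\rfloor+F(i)n-j$, $n\in\mathbb N$. An $R_{i,j}$-permutation is a permutation $\pi$ of $\mathbb N$ defined piecewise on a finite partition of $\mathbb N$ into sets $R_{i,j}$, with $\pi(n)=\lfloor(a\varphi+b)n+c\rfloor$ on each piece for integers $a,b,c$ depending on the piece. Powers denote iterated composition. *)

theory Defs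
  imports Complex_Main "HOL-Number_Theory.Fib"
begin

definition phi :: real where "phi = (1 + sqrt 5) / 2"

definition R :: "nat \<Rightarrow> int \<Rightarrow> int set" where
  "R i j = {int (fib (i+1)) * \<lfloor>of_int n * phi\<rfloor> + int (fib i) * n - j | n::int. n \<ge> 1}"

definition Rpartition :: "(nat \<times> int) list \<Rightarrow> bool" where
  "Rpartition ps \<longleftrightarrow>
     (\<forall>k < length ps. \<forall>l < length ps. k \<noteq> l \<longrightarrow>
        R (fst (ps!k)) (snd (ps!k)) \<inter> R (fst (ps!l)) (snd (ps!l)) = {}) \<and>
     (\<Union>p \<in> set ps. R (fst p) (snd p)) = {1..}"

definition Rperm :: "(int \<Rightarrow> int) \<Rightarrow> bool" where
  "Rperm \<pi> \<longleftrightarrow> bij_betw \<pi> {1..} {1..} \<and>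
     (\<exists>ps :: ((nat \<times> int) \<times> (int \<times> int \<times> int)) list.
        Rpartition (map fst ps) \<and>
        (\<forall>((i,j),(a,b,c)) \<in> set ps. \<forall>n \<in> R i j.
            \<pi> n = \<lfloor>(of_int a * phi + of_int b) * of_int n + of_int c\<rfloor>))"

definition sigma :: "int \<Rightarrow> int" where
  "sigma n = (if n \<in> R 1 0 then \<lfloor>(phi + 1) * n - 2\<rfloor>
              else if n \<in> R 3 1 then \<lfloor>phi * n + 2\<rfloor>
              else if n \<in> R 2 2 then \<lfloor>(phi - 1) * n + 2\<rfloor>
              else \<lfloor>(phi - 1) * n\<rfloor>)"

end

theory Submission
  imports Defs
begin

lemma phi_sq: "phi * phi = phi + 1"
  unfolding phi_def by (simp add: field_simps ring_distribs)

lemma phi_gt1: "phi > 1"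
proof -
  have "1 < sqrt (5::real)" by (simp add: real_less_rsqrt)
  thus ?thesis unfolding phi_def by simp
qed

lemma phi_bounds: "1618/1000 < phi" "phi < 16181/10000"
proof -
  have p: "phi * phi = phi + 1" by (rule phi_sq)
  have g: "phi > 1" by (rule phi_gt1)
  show "1618/1000 < phi"
  proof (rule ccontr)
    assume "\<not> 1618/1000 < phi"
    hence a: "phi \<le> 1618/1000" by simp
    hence "phi * phi \<le> (1618/1000) * phi" using g by (intro mult_right_mono) auto
    with p a show False by linarith
  qed
  show "phi < 16181/10000"
  proof (rule ccontr)
    assume "\<not> phi < 16181/10000"
    hence a: "phi \<ge> 16181/10000" by simp
    hence "phi * phi \<ge> (16181/10000) * phi" using g by (intro mult_right_mono) auto
    with p a show False by linarith
  qed
qed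
lemma sq_mod5: "(p::int) mod 5 \<noteq> 0 \<Longrightarrow> (p*p) mod 5 \<noteq> 0"
proof -
  assume h: "p mod 5 \<noteq> 0"
  have e: "(p*p) mod 5 = ((p mod 5)*(p mod 5)) mod 5" by (simp add: mod_mult_eq)
  have "p mod 5 \<ge> 0" "p mod 5 < 5" by auto
  hence "p mod 5 = 1 \<or> p mod 5 = 2 \<or> p mod 5 = 3 \<or> p mod 5 = 4" using h by linarith
  thus ?thesis using e by auto
qed
lemma no_sqrt5: "(p::int)*p = 5*(q*q) \<Longrightarrow> q = 0"
proof (induction "nat \<bar>q\<bar>" arbitrary: p q rule: less_induct)
  case less
  show ?case
  proof (rule ccontr)
    assume q0: "q \<noteq> 0"
    have "(p*p) mod 5 = 0" using less.prems by simp
    hence "p mod 5 = 0" using sq_mod5[of p] by metis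
    hence "5 dvd p" by presburger
    then obtain r where r: "p = 5*r" by (rule dvdE)
    have "25*(r*r) = 5*(q*q)" using less.prems r by (simp add: algebra_simps)
    hence qq: "q*q = 5*(r*r)" by linarith
    hence "(q*q) mod 5 = 0" by simp
    hence "q mod 5 = 0" using sq_mod5[of q] by metis
    hence "5 dvd q" by presburger
    then obtain s where s: "q = 5*s" by (rule dvdE)
    have "25*(s*s) = 5*(r*r)" using qq s by (simp add: algebra_simps)
    hence rr: "r*r = 5*(s*s)" by linarith
    have lt: "nat \<bar>s\<bar> < nat \<bar>q\<bar>" using s q0 by auto
    have "s = 0" using less.hyps[OF lt rr] .
    thus False using s q0 by simp
  qed
qed
lemma phi_irr: "(k::int) \<noteq> 0 \<Longrightarrow> of_int k * phi \<noteq> of_int m"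
proof
  assume k: "k \<noteq> 0" and h: "of_int k * phi = of_int m"
  have "of_int k * (1 + sqrt 5) = (2 * of_int m :: real)" using h unfolding phi_def by simp
  hence "of_int k * sqrt 5 = (of_int (2*m - k) :: real)" by (simp add: algebra_simps)
  hence "(of_int k * sqrt 5)*(of_int k * sqrt 5) = (of_int (2*m - k) * of_int (2*m-k) :: real)" by simp
  hence "real_of_int (5*(k*k)) = of_int ((2*m-k)*(2*m-k))" by (simp add: algebra_simps)
  hence "(2*m-k)*(2*m-k) = 5*(k*k)" by linarith
  thus False using no_sqrt5 k by blast
qed

definition Af :: "int \<Rightarrow> int" where "Af k = \<lfloor>of_int k * phi\<rfloor>"

lemma key:
  assumes "k \<ge> 1"
  obtains e where "0 < e" "e < 1" "of_int k * phi = of_int (Af k) + e"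
    "of_int (Af k) * phi = of_int (Af k) + of_int k + e - e * phi"
    "e * phi > 1618/1000 * e" "e * phi < 16181/10000 * e"
proof -
  define e where "e = of_int k * phi - of_int (Af k)"
  have e1: "e \<ge> 0" "e < 1" unfolding e_def Af_def by linarith+
  have "e \<noteq> 0" using phi_irr[of k "Af k"] assms unfolding e_def by auto
  hence e0: "e > 0" using e1 by simp
  have ke: "of_int k * phi = of_int (Af k) + e" unfolding e_def by simp
  have "of_int (Af k) * phi = (of_int k * phi - e) * phi" using ke by simp
  also have "\<dots> = of_int k * (phi * phi) - e * phi" by (simp add: algebra_simps)
  also have "\<dots> = of_int (Af k) + of_int k + e - e * phi" using ke by (simp add: phi_sq algebra_simps)
  finally have ae: "of_int (Af k) * phi = of_int (Af k) + of_int k + e - e * phi" .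
  have "e * phi > e * (1618/1000)" using e0 phi_bounds by (intro mult_strict_left_mono) auto
  moreover have "e * phi < e * (16181/10000)" using e0 phi_bounds by (intro mult_strict_left_mono) auto
  ultimately show ?thesis using that e0 e1 ke ae by (simp add: algebra_simps)
qed

lemma AA: assumes "k \<ge> 1" shows "Af (Af k) = Af k + k - 1"
proof -
  obtain e where h: "0 < e" "e < 1" "of_int k * phi = of_int (Af k) + e"
    "of_int (Af k) * phi = of_int (Af k) + of_int k + e - e * phi"
    "e * phi > 1618/1000 * e" "e * phi < 16181/10000 * e" using key[OF assms] by blast
  show ?thesis unfolding Af_def[of "Af k"] using h phi_bounds
    apply (subst floor_eq_iff)
    apply (simp only: of_int_add of_int_diff of_int_mult of_int_numeral of_int_1 ring_distribs)
    by linarith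
qed

lemma AB: assumes "k \<ge> 1" shows "Af (Af k + k) = 2 * Af k + k"
proof -
  obtain e where h: "0 < e" "e < 1" "of_int k * phi = of_int (Af k) + e"
    "of_int (Af k) * phi = of_int (Af k) + of_int k + e - e * phi"
    "e * phi > 1618/1000 * e" "e * phi < 16181/10000 * e" using key[OF assms] by blast
  show ?thesis unfolding Af_def[of "Af k + k"] using h phi_bounds
    apply (subst floor_eq_iff)
    apply (simp only: of_int_add of_int_diff of_int_mult of_int_numeral of_int_1 ring_distribs)
    by linarith
qed

lemma Af_step: "Af (k + 1) \<ge> Af k + 1"
proof -
  have "of_int (k+1) * phi = of_int k * phi + phi" by (simp add: algebra_simps)
  hence "of_int (k+1) * phi \<ge> of_int k * phi + 1" using phi_gt1 by linarith
  hence "\<lfloor>of_int (k+1) * phi\<rfloor> \<ge> \<lfloor>of_int k * phi + 1\<rfloor>" by (rule floor_mono)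
  thus ?thesis unfolding Af_def by simp
qed

lemma Af_mono: "k < l \<Longrightarrow> Af k < Af l"
proof (induction l rule: int_gr_induct)
  case base thus ?case using Af_step[of k] by simp
next
  case (step i) thus ?case using Af_step[of i] by simp
qed

lemma Af_inj[simp]: "Af k = Af l \<longleftrightarrow> k = l"
  by (metis Af_mono less_irrefl linorder_neqE)

lemma Bf_inj[simp]: "Af k + k = Af l + l \<longleftrightarrow> k = l"
  by (metis Af_mono add_strict_mono less_irrefl linorder_neqE)

lemma Af_pos: "k \<ge> 1 \<Longrightarrow> Af k \<ge> 1"
proof -
  assume "k \<ge> 1"
  hence "of_int k * phi \<ge> 1 * phi" using phi_gt1 by (intro mult_right_mono) auto
  hence "of_int k * phi \<ge> 1" using phi_gt1 by linarith
  thus ?thesis unfolding Af_def by (simp add: le_floor_iff)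
qed

lemma phi_inv: "(x * phi) * (phi - 1) = (x::real)"
proof -
  have "(x * phi) * (phi - 1) = x * (phi * phi) - x * phi" by (simp add: algebra_simps)
  thus ?thesis using phi_sq by (simp add: algebra_simps)
qed

lemma phi_inv2: "(x * phi + x) * (2 - phi) = (x::real)"
proof -
  have "(x * phi + x) * (2 - phi) = x * (2 + phi - phi * phi)" by (simp add: algebra_simps)
  also have "2 + phi - phi * phi = 1" using phi_sq by simp
  finally show ?thesis by simp
qed

lemma AB_disj: assumes "k1 \<ge> 1" "k2 \<ge> 1" shows "Af k1 \<noteq> Af k2 + k2"
proof
  assume eq: "Af k1 = Af k2 + k2"
  define m where "m = Af k1"
  obtain e1 where h1: "0 < e1" "e1 < 1" "of_int k1 * phi = of_int (Af k1) + e1"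
    "e1 * phi > 1618/1000 * e1" "e1 * phi < 16181/10000 * e1" using key[OF assms(1)] by metis
  obtain e2 where h2: "0 < e2" "e2 < 1" "of_int k2 * phi = of_int (Af k2) + e2"
    "e2 * phi > 1618/1000 * e2" "e2 * phi < 16181/10000 * e2" using key[OF assms(2)] by metis
  have a: "of_int k1 = (of_int m + e1) * (phi - 1)"
    using phi_inv[of "of_int k1"] h1(3) unfolding m_def by simp
  have "of_int k2 * phi + of_int k2 = of_int m + e2" using h2(3) eq unfolding m_def by simp
  hence b: "of_int k2 = (of_int m + e2) * (2 - phi)" using phi_inv2[of "of_int k2"] by simp
  have "of_int (k1 + k2) = of_int m + (e1 * phi - e1) + (2 * e2 - e2 * phi)"
    using a b by (simp add: algebra_simps)
  moreover have "0 < (e1 * phi - e1) + (2 * e2 - e2 * phi)" using h1 h2 by linarith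
  moreover have "e1 * phi - e1 < phi - 1"
  proof -
    have "e1 * (phi - 1) < 1 * (phi - 1)" using h1 phi_gt1 by (intro mult_strict_right_mono) auto
    thus ?thesis by (simp add: algebra_simps)
  qed
  moreover have "2 * e2 - e2 * phi < 2 - phi"
  proof -
    have "e2 * (2 - phi) < 1 * (2 - phi)" using h2 phi_bounds by (intro mult_strict_right_mono) auto
    thus ?thesis by (simp add: algebra_simps)
  qed
  ultimately have "real_of_int m < of_int (k1 + k2)" "real_of_int (k1 + k2) < of_int m + 1"
    by linarith+
  hence "m < k1 + k2" "k1 + k2 < m + 1" by linarith+
  thus False by linarith
qed

lemma phi_sq_mult: "(x::real) * phi * phi = x * phi + x"
proof -
  have "x * phi * phi = x * (phi * phi)" by (simp add: mult.assoc)
  thus ?thesis using phi_sq by (simp add: algebra_simps)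
qed

lemma AB_cover: assumes m: "m \<ge> 1" shows "(\<exists>k\<ge>1. m = Af k) \<or> (\<exists>k\<ge>1. m = Af k + k)"
proof -
  define t where "t = \<lfloor>of_int (m+1) * (phi - 1)\<rfloor>"
  have t1: "of_int t \<le> of_int m * phi - of_int m + phi - 1"
    "of_int m * phi - of_int m + phi - 1 < of_int t + 1"
    unfolding t_def by (simp_all add: algebra_simps; linarith)+
  have "of_int t * phi \<le> (of_int (m+1) * (phi - 1)) * phi"
    using t1 phi_gt1 by (intro mult_right_mono) (auto simp: algebra_simps)
  also have "(of_int (m+1) * (phi - 1)) * phi = of_int (m+1)"
    using phi_inv[of "of_int (m+1)"] by (simp add: algebra_simps)
  finally have t2: "of_int t * phi \<le> of_int m + 1" by simp
  have "(of_int (m+1) * (phi - 1) - 1) * phi < of_int t * phi"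
    using t1 phi_gt1 by (intro mult_strict_right_mono) (auto simp: algebra_simps)
  also have "(of_int (m+1) * (phi - 1) - 1) * phi = of_int (m+1) - phi"
    using phi_inv[of "of_int (m+1)"] by (simp add: algebra_simps)
  finally have t3: "of_int m + 1 - phi < of_int t * phi" by simp
  have tne: "of_int t * phi \<noteq> of_int m"
  proof (cases "t = 0")
    case True thus ?thesis using m by simp
  next
    case False thus ?thesis using phi_irr by blast
  qed
  show ?thesis
  proof (cases "of_int t * phi > of_int m")
    case True
    hence "t \<noteq> 0" using m by auto
    hence "of_int t * phi \<noteq> of_int (m+1)" using phi_irr by blast
    hence "of_int t * phi < of_int m + 1" using t2 by simp
    hence "Af t = m" unfolding Af_def using True by (simp add: floor_eq_iff)
    moreover have "t \<ge> 1"
    proof (rule ccontr)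
      assume "\<not> t \<ge> 1"
      hence "of_int t * phi \<le> 0" using phi_gt1 by (simp add: mult_nonpos_nonneg)
      thus False using True m by simp
    qed
    ultimately show ?thesis by auto
  next
    case False
    hence lt: "of_int t * phi < of_int m" using tne by simp
    have "of_int t * phi * phi < of_int m * phi" using lt phi_gt1 by (intro mult_strict_right_mono) auto
    moreover have "of_int t * phi * phi = of_int t * phi + of_int t"
      by (rule phi_sq_mult)
    ultimately have l1: "of_int t + of_int t * phi < of_int m * phi" by simp
    have "Af (m - t) = t" unfolding Af_def
      using l1 t1 t3 by (simp add: floor_eq_iff algebra_simps)
    moreover have "m - t \<ge> 1"
    proof (rule ccontr)
      assume "\<not> m - t \<ge> 1"
      hence "of_int m \<le> real_of_int t" by simp
      hence "of_int m * phi \<le> of_int t * phi" using phi_gt1 by (intro mult_right_mono) auto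
      moreover have "of_int m * phi > of_int m * 1" using m phi_gt1 by (intro mult_strict_left_mono) auto
      ultimately show False using lt by simp
    qed
    ultimately have "m = Af (m - t) + (m - t)" by simp
    thus ?thesis using \<open>m - t \<ge> 1\<close> by blast
  qed
qed

lemma F1: assumes "k \<ge> 1" shows "\<lfloor>(phi + 1) * of_int (Af k + k) - 2\<rfloor> = 3 * Af k + 2 * k - 2"
proof -
  obtain e where h: "0 < e" "e < 1" "of_int k * phi = of_int (Af k) + e"
    "of_int (Af k) * phi = of_int (Af k) + of_int k + e - e * phi"
    "e * phi > 1618/1000 * e" "e * phi < 16181/10000 * e" using key[OF assms] by blast
  show ?thesis
    apply (subst floor_eq_iff)
    apply (simp only: of_int_add of_int_diff of_int_mult of_int_numeral of_int_1 ring_distribs)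
    using h phi_bounds by (simp add: algebra_simps; linarith)
qed

lemma F2: assumes "k \<ge> 1" shows "\<lfloor>phi * of_int (3 * Af k + 2 * k - 1) + 2\<rfloor> = 5 * Af k + 3 * k"
proof -
  obtain e where h: "0 < e" "e < 1" "of_int k * phi = of_int (Af k) + e"
    "of_int (Af k) * phi = of_int (Af k) + of_int k + e - e * phi"
    "e * phi > 1618/1000 * e" "e * phi < 16181/10000 * e" using key[OF assms] by blast
  show ?thesis
    apply (subst floor_eq_iff)
    apply (simp only: of_int_add of_int_diff of_int_mult of_int_numeral of_int_1 ring_distribs)
    using h phi_bounds by (simp add: algebra_simps; linarith)
qed

lemma F3: assumes "k \<ge> 1" shows "\<lfloor>(phi - 1) * of_int (2 * Af k + k - 2) + 2\<rfloor> = Af k + k"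
proof -
  obtain e where h: "0 < e" "e < 1" "of_int k * phi = of_int (Af k) + e"
    "of_int (Af k) * phi = of_int (Af k) + of_int k + e - e * phi"
    "e * phi > 1618/1000 * e" "e * phi < 16181/10000 * e" using key[OF assms] by blast
  show ?thesis
    apply (subst floor_eq_iff)
    apply (simp only: of_int_add of_int_diff of_int_mult of_int_numeral of_int_1 ring_distribs)
    using h phi_bounds by (simp add: algebra_simps; linarith)
qed

lemma F4: assumes "k \<ge> 1" shows "\<lfloor>(phi - 1) * of_int (2 * Af k + k)\<rfloor> = Af k + k - 1"
proof -
  obtain e where h: "0 < e" "e < 1" "of_int k * phi = of_int (Af k) + e"
    "of_int (Af k) * phi = of_int (Af k) + of_int k + e - e * phi"
    "e * phi > 1618/1000 * e" "e * phi < 16181/10000 * e" using key[OF assms] by blast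
  show ?thesis
    apply (subst floor_eq_iff)
    apply (simp only: of_int_add of_int_diff of_int_mult of_int_numeral of_int_1 ring_distribs)
    using h phi_bounds by (simp add: algebra_simps; linarith)
qed

lemma F5: assumes "k \<ge> 1" shows "\<lfloor>phi * of_int (2 * Af k + k - 2) + 2\<rfloor> = 3 * Af k + 2 * k - 2"
proof -
  obtain e where h: "0 < e" "e < 1" "of_int k * phi = of_int (Af k) + e"
    "of_int (Af k) * phi = of_int (Af k) + of_int k + e - e * phi"
    "e * phi > 1618/1000 * e" "e * phi < 16181/10000 * e" using key[OF assms] by blast
  show ?thesis
    apply (subst floor_eq_iff)
    apply (simp only: of_int_add of_int_diff of_int_mult of_int_numeral of_int_1 ring_distribs)
    using h phi_bounds by (simp add: algebra_simps; linarith)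
qed

lemma F6: assumes "k \<ge> 1" shows "\<lfloor>phi * of_int (Af k + k) - 2\<rfloor> = 2 * Af k + k - 2"
proof -
  obtain e where h: "0 < e" "e < 1" "of_int k * phi = of_int (Af k) + e"
    "of_int (Af k) * phi = of_int (Af k) + of_int k + e - e * phi"
    "e * phi > 1618/1000 * e" "e * phi < 16181/10000 * e" using key[OF assms] by blast
  show ?thesis
    apply (subst floor_eq_iff)
    apply (simp only: of_int_add of_int_diff of_int_mult of_int_numeral of_int_1 ring_distribs)
    using h phi_bounds by (simp add: algebra_simps; linarith)
qed

lemma F7: assumes "k \<ge> 1" shows "\<lfloor>(2 - phi) * of_int (3 * Af k + 2 * k - 2) + 1\<rfloor> = Af k + k"
proof -
  obtain e where h: "0 < e" "e < 1" "of_int k * phi = of_int (Af k) + e"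
    "of_int (Af k) * phi = of_int (Af k) + of_int k + e - e * phi"
    "e * phi > 1618/1000 * e" "e * phi < 16181/10000 * e" using key[OF assms] by blast
  show ?thesis
    apply (subst floor_eq_iff)
    apply (simp only: of_int_add of_int_diff of_int_mult of_int_numeral of_int_1 ring_distribs)
    using h phi_bounds by (simp add: algebra_simps; linarith)
qed

lemma F8: assumes "k \<ge> 1" shows "\<lfloor>(phi - 1) * of_int (5 * Af k + 3 * k)\<rfloor> = 3 * Af k + 2 * k - 1"
proof -
  obtain e where h: "0 < e" "e < 1" "of_int k * phi = of_int (Af k) + e"
    "of_int (Af k) * phi = of_int (Af k) + of_int k + e - e * phi"
    "e * phi > 1618/1000 * e" "e * phi < 16181/10000 * e" using key[OF assms] by blast
  show ?thesis
    apply (subst floor_eq_iff)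
    apply (simp only: of_int_add of_int_diff of_int_mult of_int_numeral of_int_1 ring_distribs)
    using h phi_bounds by (simp add: algebra_simps; linarith)
qed

lemma F9: assumes "k \<ge> 1" shows "\<lfloor>phi * of_int (Af k + k - 1) + 2\<rfloor> = 2 * Af k + k"
proof -
  obtain e where h: "0 < e" "e < 1" "of_int k * phi = of_int (Af k) + e"
    "of_int (Af k) * phi = of_int (Af k) + of_int k + e - e * phi"
    "e * phi > 1618/1000 * e" "e * phi < 16181/10000 * e" using key[OF assms] by blast
  show ?thesis
    apply (subst floor_eq_iff)
    apply (simp only: of_int_add of_int_diff of_int_mult of_int_numeral of_int_1 ring_distribs)
    using h phi_bounds by (simp add: algebra_simps; linarith)
qed

lemma F10: assumes "k \<ge> 1" shows "\<lfloor>(phi - 1) * of_int (3 * Af k + 2 * k - 2)\<rfloor> = 2 * Af k + k - 2"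
proof -
  obtain e where h: "0 < e" "e < 1" "of_int k * phi = of_int (Af k) + e"
    "of_int (Af k) * phi = of_int (Af k) + of_int k + e - e * phi"
    "e * phi > 1618/1000 * e" "e * phi < 16181/10000 * e" using key[OF assms] by blast
  show ?thesis
    apply (subst floor_eq_iff)
    apply (simp only: of_int_add of_int_diff of_int_mult of_int_numeral of_int_1 ring_distribs)
    using h phi_bounds by (simp add: algebra_simps; linarith)
qed

definition Bf :: "int \<Rightarrow> int" where "Bf k = Af k + k"

lemma fibs: "fib 1 = 1" "fib 2 = 1" "fib 3 = 2" "fib 4 = 3" "fib 5 = 5"
  by (simp_all add: eval_nat_numeral)

lemma Bf_inj'[simp]: "Bf k = Bf l \<longleftrightarrow> k = l" unfolding Bf_def by simp
lemma Bf_pos: "k \<ge> 1 \<Longrightarrow> Bf k \<ge> 1" unfolding Bf_def using Af_pos by force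
lemma AB_ne: "x \<ge> 1 \<Longrightarrow> y \<ge> 1 \<Longrightarrow> Af x \<noteq> Bf y" unfolding Bf_def using AB_disj by blast

lemma cf_AA: "k \<ge> 1 \<Longrightarrow> Af (Af k) = Af k + k - 1" by (rule AA)
lemma cf_AB: "k \<ge> 1 \<Longrightarrow> Af (Bf k) = 2 * Af k + k" unfolding Bf_def by (rule AB)
lemma cf_AAA: "k \<ge> 1 \<Longrightarrow> Af (Af (Af k)) = 2 * Af k + k - 2"
  using AA[of "Af k"] AA[of k] Af_pos[of k] by simp
lemma cf_AAB: "k \<ge> 1 \<Longrightarrow> Af (Af (Bf k)) = 3 * Af k + 2 * k - 1"
  using AA[of "Bf k"] cf_AB[of k] Bf_pos[of k] unfolding Bf_def by simp
lemma cf_ABA: "k \<ge> 1 \<Longrightarrow> Af (Bf (Af k)) = 3 * Af k + 2 * k - 2"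
  using cf_AB[of "Af k"] AA[of k] Af_pos[of k] by simp
lemma cf_ABB: "k \<ge> 1 \<Longrightarrow> Af (Bf (Bf k)) = 5 * Af k + 3 * k"
  using cf_AB[of "Bf k"] cf_AB[of k] Bf_pos[of k] unfolding Bf_def by simp

lemma R_alt: "R i j = (\<lambda>n. int (fib (i+1)) * Af n + int (fib i) * n - j) ` {1..}"
  unfolding R_def Af_def by auto

lemma img_cong: "(\<And>k. k \<ge> 1 \<Longrightarrow> f k = g k) \<Longrightarrow> f ` {1..} = g ` ({1..} :: int set)"
  by (rule image_cong) auto

lemma L_B: "R 1 0 = Bf ` {1..}" unfolding R_alt by (rule img_cong) (simp add: fibs Bf_def)
lemma L_AA: "R 1 1 = (\<lambda>k. Af (Af k)) ` {1..}" unfolding R_alt by (rule img_cong) (simp add: fibs cf_AA)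
lemma L_AB: "R 2 0 = (\<lambda>k. Af (Bf k)) ` {1..}" unfolding R_alt by (rule img_cong) (simp add: fibs cf_AB)
lemma L_AAA: "R 2 2 = (\<lambda>k. Af (Af (Af k))) ` {1..}" unfolding R_alt by (rule img_cong) (simp add: fibs cf_AAA)
lemma L_AAB: "R 3 1 = (\<lambda>k. Af (Af (Bf k))) ` {1..}" unfolding R_alt by (rule img_cong) (simp add: fibs cf_AAB)
lemma L_ABA: "R 3 2 = (\<lambda>k. Af (Bf (Af k))) ` {1..}" unfolding R_alt by (rule img_cong) (simp add: fibs cf_ABA)
lemma L_ABB: "R 4 0 = (\<lambda>k. Af (Bf (Bf k))) ` {1..}" unfolding R_alt by (rule img_cong) (simp add: fibs cf_ABB)

lemma AB_ne1[simp]: "x \<ge> 1 \<Longrightarrow> y \<ge> 1 \<Longrightarrow> (Af x = Bf y) = False" using AB_ne by blast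
lemma AB_ne2[simp]: "x \<ge> 1 \<Longrightarrow> y \<ge> 1 \<Longrightarrow> (Bf y = Af x) = False" using AB_ne by metis
lemmas pos_simps[simp] = Af_pos Bf_pos

lemma D_10_31: "R 1 0 \<inter> R 3 1 = {}" unfolding L_B L_AAB by auto
lemma D_10_22: "R 1 0 \<inter> R 2 2 = {}" unfolding L_B L_AAA by auto
lemma D_10_32: "R 1 0 \<inter> R 3 2 = {}" unfolding L_B L_ABA by auto
lemma D_10_40: "R 1 0 \<inter> R 4 0 = {}" unfolding L_B L_ABB by auto
lemma D_22_31: "R 2 2 \<inter> R 3 1 = {}" unfolding L_AAA L_AAB by auto
lemma D_22_32: "R 2 2 \<inter> R 3 2 = {}" unfolding L_AAA L_ABA by auto
lemma D_22_40: "R 2 2 \<inter> R 4 0 = {}" unfolding L_AAA L_ABB by auto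
lemma D_31_32: "R 3 1 \<inter> R 3 2 = {}" unfolding L_AAB L_ABA by auto
lemma D_31_40: "R 3 1 \<inter> R 4 0 = {}" unfolding L_AAB L_ABB by auto
lemma D_32_40: "R 3 2 \<inter> R 4 0 = {}" unfolding L_ABA L_ABB by auto

lemma P_AB: "{1..} = Af ` {1..} \<union> Bf ` {1..}"
proof
  show "{1..} \<subseteq> Af ` {1..} \<union> Bf ` {1..}"
  proof
    fix m :: int assume "m \<in> {1..}"
    hence "m \<ge> 1" by simp
    from AB_cover[OF this] show "m \<in> Af ` {1..} \<union> Bf ` {1..}" unfolding Bf_def by auto
  qed
  show "Af ` {1..} \<union> Bf ` {1..} \<subseteq> {1..}" by auto
qed

lemma U_11: "R 1 1 = R 2 2 \<union> R 3 1"
proof -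
  have "R 2 2 \<union> R 3 1 = (\<lambda>k. Af (Af k)) ` (Af ` {1..} \<union> Bf ` {1..})"
    unfolding L_AAA L_AAB image_Un image_image by simp
  thus ?thesis unfolding L_AA using P_AB by simp
qed

lemma U_11': "R (Suc 0) 1 = R 2 2 \<union> R 3 1" using U_11 by simp

lemma U_20: "R 2 0 = R 3 2 \<union> R 4 0"
proof -
  have "R 3 2 \<union> R 4 0 = (\<lambda>k. Af (Bf k)) ` (Af ` {1..} \<union> Bf ` {1..})"
    unfolding L_ABA L_ABB image_Un image_image by simp
  thus ?thesis unfolding L_AB using P_AB by simp
qed

lemma cover5: "{1..} = R 1 0 \<union> R 2 2 \<union> R 3 1 \<union> R 3 2 \<union> R 4 0"
proof -
  have "R 1 1 \<union> R 2 0 = Af ` (Af ` {1..} \<union> Bf ` {1..})"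
    unfolding L_AA L_AB image_Un image_image by simp
  hence "R 1 1 \<union> R 2 0 = Af ` {1..}" using P_AB by simp
  hence "{1..} = R 1 1 \<union> R 2 0 \<union> R 1 0" using P_AB L_B by simp
  thus ?thesis using U_11 U_20 by blast
qed

lemma Rpart_intro:
  assumes "distinct ps"
    "\<forall>p\<in>set ps. \<forall>q\<in>set ps. p \<noteq> q \<longrightarrow> R (fst p) (snd p) \<inter> R (fst q) (snd q) = {}"
    "(\<Union>p\<in>set ps. R (fst p) (snd p)) = {1..}"
  shows "Rpartition ps"
  unfolding Rpartition_def
proof (intro conjI allI impI)
  fix k l assume "k < length ps" "l < length ps" "k \<noteq> l"
  hence "ps ! k \<noteq> ps ! l" "ps ! k \<in> set ps" "ps ! l \<in> set ps"
    using assms(1) by (auto simp: nth_eq_iff_index_eq)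
  thus "R (fst (ps ! k)) (snd (ps ! k)) \<inter> R (fst (ps ! l)) (snd (ps ! l)) = {}" using assms(2) by blast
qed (rule assms(3))

lemmas Dall = D_10_31 D_10_22 D_10_32 D_10_40 D_22_31 D_22_32 D_22_40 D_31_32 D_31_40 D_32_40

lemma part1: "Rpartition [(1,0),(3,1),(2,2),(2,0)]"
  apply (rule Rpart_intro)
  using Dall cover5 by (auto simp: U_20)

lemma part2: "Rpartition [(2,2),(1,0),(4,0),(3,1),(3,2)]"
  apply (rule Rpart_intro)
  using Dall cover5 by auto

lemma part3: "Rpartition [(3,1),(4,0),(3,2),(2,2),(1,0)]"
  apply (rule Rpart_intro)
  using Dall cover5 by auto

lemma part4: "Rpartition [(1,0),(2,2),(3,2),(4,0),(3,1)]"
  apply (rule Rpart_intro)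
  using Dall cover5 by auto

lemma part5: "Rpartition [(1,1),(1,0),(4,0),(3,2)]"
  apply (rule Rpart_intro)
  using Dall cover5 by (auto simp: U_11 U_11')

lemma mem_B: "k \<ge> 1 \<Longrightarrow> Bf k \<in> R 1 0" unfolding L_B by auto
lemma mem_AAA: "k \<ge> 1 \<Longrightarrow> Af (Af (Af k)) \<in> R 2 2" unfolding L_AAA by auto
lemma mem_AAB: "k \<ge> 1 \<Longrightarrow> Af (Af (Bf k)) \<in> R 3 1" unfolding L_AAB by auto
lemma mem_AB: "k \<ge> 1 \<Longrightarrow> Af (Bf k) \<in> R 2 0" unfolding L_AB by auto

lemma sig_B: assumes k: "k \<ge> 1" shows "sigma (Bf k) = Af (Bf (Af k))"
proof -
  have "sigma (Bf k) = \<lfloor>(phi + 1) * of_int (Bf k) - 2\<rfloor>"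
    using mem_B[OF k] unfolding sigma_def by simp
  also have "\<dots> = 3 * Af k + 2 * k - 2" using F1[OF k] unfolding Bf_def .
  finally show ?thesis using cf_ABA[OF k] by simp
qed

lemma sig_AAB: assumes k: "k \<ge> 1" shows "sigma (Af (Af (Bf k))) = Af (Bf (Bf k))"
proof -
  have m: "Af (Af (Bf k)) \<notin> R 1 0" using mem_AAB[OF k] D_10_31 by blast
  have "sigma (Af (Af (Bf k))) = \<lfloor>phi * of_int (Af (Af (Bf k))) + 2\<rfloor>"
    using mem_AAB[OF k] m unfolding sigma_def by simp
  also have "\<dots> = \<lfloor>phi * of_int (3 * Af k + 2 * k - 1) + 2\<rfloor>" using cf_AAB[OF k] by simp
  also have "\<dots> = 5 * Af k + 3 * k" using F2[OF k] .
  finally show ?thesis using cf_ABB[OF k] by simp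
qed

lemma sig_AAA: assumes k: "k \<ge> 1" shows "sigma (Af (Af (Af k))) = Bf k"
proof -
  have m: "Af (Af (Af k)) \<notin> R 1 0" "Af (Af (Af k)) \<notin> R 3 1"
    using mem_AAA[OF k] D_10_22 D_22_31 by blast+
  have "sigma (Af (Af (Af k))) = \<lfloor>(phi - 1) * of_int (Af (Af (Af k))) + 2\<rfloor>"
    using mem_AAA[OF k] m unfolding sigma_def by simp
  also have "\<dots> = \<lfloor>(phi - 1) * of_int (2 * Af k + k - 2) + 2\<rfloor>" using cf_AAA[OF k] by simp
  also have "\<dots> = Af k + k" using F3[OF k] .
  finally show ?thesis unfolding Bf_def .
qed

lemma sig_AB: assumes k: "k \<ge> 1" shows "sigma (Af (Bf k)) = Af (Af k)"
proof -
  have m: "Af (Bf k) \<notin> R 1 0" "Af (Bf k) \<notin> R 3 1" "Af (Bf k) \<notin> R 2 2"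
    using mem_AB[OF k] D_10_32 D_10_40 D_31_32 D_31_40 D_22_32 D_22_40 unfolding U_20 by blast+
  have "sigma (Af (Bf k)) = \<lfloor>(phi - 1) * of_int (Af (Bf k))\<rfloor>"
    using m unfolding sigma_def by simp
  also have "\<dots> = \<lfloor>(phi - 1) * of_int (2 * Af k + k)\<rfloor>" using cf_AB[OF k] by simp
  also have "\<dots> = Af k + k - 1" using F4[OF k] .
  finally show ?thesis using cf_AA[OF k] by simp
qed

lemmas sig_simps[simp] = sig_B sig_AAB sig_AAA sig_AB

lemma pw: "(f ^^ 2) x = f (f x)" "(f ^^ 3) x = f (f (f x))" "(f ^^ 4) x = f (f (f (f x)))"
  "(f ^^ 5) x = f (f (f (f (f x))))" "(f ^^ 6) x = f (f (f (f (f (f x)))))"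
  by (simp_all add: eval_nat_numeral)

lemma sig_pos: "n \<ge> 1 \<Longrightarrow> sigma n \<ge> 1"
proof -
  assume "n \<ge> 1"
  hence "n \<in> R 1 0 \<union> R 2 2 \<union> R 3 1 \<union> R 3 2 \<union> R 4 0" using cover5 by auto
  thus ?thesis unfolding L_B L_AAA L_AAB L_ABA L_ABB by auto
qed

lemma sig6: "n \<ge> 1 \<Longrightarrow> (sigma ^^ 6) n = n"
proof -
  assume "n \<ge> 1"
  hence "n \<in> R 1 0 \<union> R 2 2 \<union> R 3 1 \<union> R 3 2 \<union> R 4 0" using cover5 by auto
  thus ?thesis unfolding L_B L_AAA L_AAB L_ABA L_ABB pw by auto
qed

lemma c2_22: "\<forall>n \<in> R 2 2. (sigma ^^ 2) n = \<lfloor>phi * of_int n + 2\<rfloor>"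
proof
  fix n assume "n \<in> R 2 2"
  then obtain k where k: "k \<ge> 1" and n: "n = Af (Af (Af k))" unfolding L_AAA by auto
  have "(sigma ^^ 2) n = Af (Bf (Af k))" unfolding n pw using k by simp
  also have "\<dots> = \<lfloor>phi * of_int (Af (Af (Af k))) + 2\<rfloor>" using F5[OF k] cf_AAA[OF k] cf_ABA[OF k] by (simp only: Bf_def)
  finally show "(sigma ^^ 2) n = \<lfloor>phi * of_int n + 2\<rfloor>" unfolding n .
qed

lemma c2_10: "\<forall>n \<in> R 1 0. (sigma ^^ 2) n = \<lfloor>phi * of_int n - 2\<rfloor>"
proof
  fix n assume "n \<in> R 1 0"
  then obtain k where k: "k \<ge> 1" and n: "n = Bf k" unfolding L_B by auto
  have "(sigma ^^ 2) n = Af (Af (Af k))" unfolding n pw using k by simp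
  also have "\<dots> = \<lfloor>phi * of_int (Bf k) - 2\<rfloor>" using F6[OF k] Bf_def[of k] cf_AAA[OF k] by (simp only: Bf_def)
  finally show "(sigma ^^ 2) n = \<lfloor>phi * of_int n - 2\<rfloor>" unfolding n .
qed

lemma c2_32: "\<forall>n \<in> R 3 2. (sigma ^^ 2) n = \<lfloor>(2 - phi) * of_int n + 1\<rfloor>"
proof
  fix n assume "n \<in> R 3 2"
  then obtain k where k: "k \<ge> 1" and n: "n = Af (Bf (Af k))" unfolding L_ABA by auto
  have "(sigma ^^ 2) n = Bf k" unfolding n pw using k by simp
  also have "\<dots> = \<lfloor>(2 - phi) * of_int (Af (Bf (Af k))) + 1\<rfloor>" using F7[OF k] cf_ABA[OF k] Bf_def[of k] by (simp only: Bf_def)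
  finally show "(sigma ^^ 2) n = \<lfloor>(2 - phi) * of_int n + 1\<rfloor>" unfolding n .
qed

lemma c3_31: "\<forall>n \<in> R 3 1. (sigma ^^ 3) n = \<lfloor>phi * of_int n + 2\<rfloor>"
proof
  fix n assume "n \<in> R 3 1"
  then obtain k where k: "k \<ge> 1" and n: "n = Af (Af (Bf k))" unfolding L_AAB by auto
  have "(sigma ^^ 3) n = Af (Bf (Bf k))" unfolding n pw using k by simp
  also have "\<dots> = \<lfloor>phi * of_int (Af (Af (Bf k))) + 2\<rfloor>" using F2[OF k] cf_AAB[OF k] cf_ABB[OF k] by (simp only: Bf_def)
  finally show "(sigma ^^ 3) n = \<lfloor>phi * of_int n + 2\<rfloor>" unfolding n .
qed

lemma c3_40: "\<forall>n \<in> R 4 0. (sigma ^^ 3) n = \<lfloor>(phi - 1) * of_int n\<rfloor>"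
proof
  fix n assume "n \<in> R 4 0"
  then obtain k where k: "k \<ge> 1" and n: "n = Af (Bf (Bf k))" unfolding L_ABB by auto
  have "(sigma ^^ 3) n = Af (Af (Bf k))" unfolding n pw using k by simp
  also have "\<dots> = \<lfloor>(phi - 1) * of_int (Af (Bf (Bf k)))\<rfloor>" using F8[OF k] cf_ABB[OF k] cf_AAB[OF k] by (simp only: Bf_def)
  finally show "(sigma ^^ 3) n = \<lfloor>(phi - 1) * of_int n\<rfloor>" unfolding n .
qed

lemma c4_10: "\<forall>n \<in> R 1 0. (sigma ^^ 4) n = \<lfloor>(phi + 1) * of_int n - 2\<rfloor>"
proof
  fix n assume "n \<in> R 1 0"
  then obtain k where k: "k \<ge> 1" and n: "n = Bf k" unfolding L_B by auto
  have "(sigma ^^ 4) n = Af (Bf (Af k))" unfolding n pw using k by simp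
  also have "\<dots> = \<lfloor>(phi + 1) * of_int (Bf k) - 2\<rfloor>" using F1[OF k] Bf_def[of k] cf_ABA[OF k] by (simp only: Bf_def)
  finally show "(sigma ^^ 4) n = \<lfloor>(phi + 1) * of_int n - 2\<rfloor>" unfolding n .
qed

lemma c4_22: "\<forall>n \<in> R 2 2. (sigma ^^ 4) n = \<lfloor>(phi - 1) * of_int n + 2\<rfloor>"
proof
  fix n assume "n \<in> R 2 2"
  then obtain k where k: "k \<ge> 1" and n: "n = Af (Af (Af k))" unfolding L_AAA by auto
  have "(sigma ^^ 4) n = Bf k" unfolding n pw using k by simp
  also have "\<dots> = \<lfloor>(phi - 1) * of_int (Af (Af (Af k))) + 2\<rfloor>" using F3[OF k] cf_AAA[OF k] Bf_def[of k] by (simp only: Bf_def)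
  finally show "(sigma ^^ 4) n = \<lfloor>(phi - 1) * of_int n + 2\<rfloor>" unfolding n .
qed

lemma c4_32: "\<forall>n \<in> R 3 2. (sigma ^^ 4) n = \<lfloor>(phi - 1) * of_int n\<rfloor>"
proof
  fix n assume "n \<in> R 3 2"
  then obtain k where k: "k \<ge> 1" and n: "n = Af (Bf (Af k))" unfolding L_ABA by auto
  have "(sigma ^^ 4) n = Af (Af (Af k))" unfolding n pw using k by simp
  also have "\<dots> = \<lfloor>(phi - 1) * of_int (Af (Bf (Af k)))\<rfloor>" using F10[OF k] cf_ABA[OF k] cf_AAA[OF k] by (simp only: Bf_def)
  finally show "(sigma ^^ 4) n = \<lfloor>(phi - 1) * of_int n\<rfloor>" unfolding n .
qed

lemma c5_10: "\<forall>n \<in> R 1 0. (sigma ^^ 5) n = \<lfloor>phi * of_int n - 2\<rfloor>"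
proof
  fix n assume "n \<in> R 1 0"
  then obtain k where k: "k \<ge> 1" and n: "n = Bf k" unfolding L_B by auto
  have "(sigma ^^ 5) n = Af (Af (Af k))" unfolding n pw using k by simp
  also have "\<dots> = \<lfloor>phi * of_int (Bf k) - 2\<rfloor>" using F6[OF k] Bf_def[of k] cf_AAA[OF k] by (simp only: Bf_def)
  finally show "(sigma ^^ 5) n = \<lfloor>phi * of_int n - 2\<rfloor>" unfolding n .
qed

lemma c5_40: "\<forall>n \<in> R 4 0. (sigma ^^ 5) n = \<lfloor>(phi - 1) * of_int n\<rfloor>"
proof
  fix n assume "n \<in> R 4 0"
  then obtain k where k: "k \<ge> 1" and n: "n = Af (Bf (Bf k))" unfolding L_ABB by auto
  have "(sigma ^^ 5) n = Af (Af (Bf k))" unfolding n pw using k by simp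
  also have "\<dots> = \<lfloor>(phi - 1) * of_int (Af (Bf (Bf k)))\<rfloor>" using F8[OF k] cf_ABB[OF k] cf_AAB[OF k] by (simp only: Bf_def)
  finally show "(sigma ^^ 5) n = \<lfloor>(phi - 1) * of_int n\<rfloor>" unfolding n .
qed

lemma c5_32: "\<forall>n \<in> R 3 2. (sigma ^^ 5) n = \<lfloor>(2 - phi) * of_int n + 1\<rfloor>"
proof
  fix n assume "n \<in> R 3 2"
  then obtain k where k: "k \<ge> 1" and n: "n = Af (Bf (Af k))" unfolding L_ABA by auto
  have "(sigma ^^ 5) n = Bf k" unfolding n pw using k by simp
  also have "\<dots> = \<lfloor>(2 - phi) * of_int (Af (Bf (Af k))) + 1\<rfloor>" using F7[OF k] cf_ABA[OF k] Bf_def[of k] by (simp only: Bf_def)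
  finally show "(sigma ^^ 5) n = \<lfloor>(2 - phi) * of_int n + 1\<rfloor>" unfolding n .
qed

lemma i2b_AAB: "\<forall>n \<in> R 3 1. (sigma ^^ 2) n = n"
  unfolding L_AAB pw by auto

lemma i2b_ABB: "\<forall>n \<in> R 4 0. (sigma ^^ 2) n = n"
  unfolding L_ABB pw by auto

lemma i3_B: "\<forall>n \<in> R 1 0. (sigma ^^ 3) n = n"
  unfolding L_B pw by auto

lemma i3_AAA: "\<forall>n \<in> R 2 2. (sigma ^^ 3) n = n"
  unfolding L_AAA pw by auto

lemma i3_ABA: "\<forall>n \<in> R 3 2. (sigma ^^ 3) n = n"
  unfolding L_ABA pw by auto

lemma i4_AAB: "\<forall>n \<in> R 3 1. (sigma ^^ 4) n = n"
  unfolding L_AAB pw by auto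

lemma i4_ABB: "\<forall>n \<in> R 4 0. (sigma ^^ 4) n = n"
  unfolding L_ABB pw by auto

lemma c5_11: "\<forall>n \<in> R 1 1. (sigma ^^ 5) n = \<lfloor>phi * of_int n + 2\<rfloor>"
proof
  fix n assume "n \<in> R 1 1"
  then obtain j where j: "j \<ge> 1" and n: "n = Af (Af j)" unfolding L_AA by auto
  have "j \<in> Af ` {1..} \<union> Bf ` {1..}" using j P_AB by auto
  hence "(sigma ^^ 5) n = Af (Bf j)" unfolding n pw by auto
  also have "\<dots> = \<lfloor>phi * of_int (Af (Af j)) + 2\<rfloor>" using F9[OF j] cf_AB[OF j] cf_AA[OF j] by simp
  finally show "(sigma ^^ 5) n = \<lfloor>phi * of_int n + 2\<rfloor>" unfolding n .
qed

lemma pow_pos: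
  fixes f :: "int \<Rightarrow> int"
  assumes p: "\<And>x. x \<ge> 1 \<Longrightarrow> f x \<ge> 1" and x: "x \<ge> 1"
  shows "(f ^^ i) x \<ge> 1"
proof (induction i)
  case 0 show ?case using x by simp
next
  case (Suc i) thus ?case using p by simp
qed

lemma bij_pow:
  assumes p: "\<And>x. x \<ge> 1 \<Longrightarrow> f x \<ge> (1::int)" and s: "\<And>x. x \<ge> 1 \<Longrightarrow> (f ^^ 6) x = x"
    and m: "m \<le> 6"
  shows "bij_betw (f ^^ m) {1..} {1..}"
proof (rule bij_betw_byWitness[where f' = "f ^^ (6 - m)"])
  show "\<forall>a\<in>{1..}. (f ^^ (6 - m)) ((f ^^ m) a) = a"
  proof
    fix a :: int assume "a \<in> {1..}"
    have "(f ^^ (6 - m)) ((f ^^ m) a) = (f ^^ (6 - m + m)) a" by (simp add: funpow_add)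
    also have "6 - m + m = 6" using m by simp
    finally show "(f ^^ (6 - m)) ((f ^^ m) a) = a" using s \<open>a \<in> {1..}\<close> by simp
  qed
  show "\<forall>a\<in>{1..}. (f ^^ m) ((f ^^ (6 - m)) a) = a"
  proof
    fix a :: int assume "a \<in> {1..}"
    have "(f ^^ m) ((f ^^ (6 - m)) a) = (f ^^ (m + (6 - m))) a" by (simp add: funpow_add)
    also have "m + (6 - m) = 6" using m by simp
    finally show "(f ^^ m) ((f ^^ (6 - m)) a) = a" using s \<open>a \<in> {1..}\<close> by simp
  qed
  show "(f ^^ m) ` {1..} \<subseteq> {1..}" using pow_pos[of f] p by auto
  show "(f ^^ (6 - m)) ` {1..} \<subseteq> {1..}" using pow_pos[of f] p by auto
qed

lemma bij_sig: "m \<le> 6 \<Longrightarrow> bij_betw (sigma ^^ m) {1..} {1..}"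
  using bij_pow[of sigma] sig_pos sig6 by blast

lemma s_10: "\<forall>n \<in> R 1 0. sigma n = \<lfloor>(phi + 1) * of_int n - 2\<rfloor>"
  unfolding sigma_def by simp
lemma s_31: "\<forall>n \<in> R 3 1. sigma n = \<lfloor>phi * of_int n + 2\<rfloor>"
  using D_10_31 unfolding sigma_def by auto
lemma s_22: "\<forall>n \<in> R 2 2. sigma n = \<lfloor>(phi - 1) * of_int n + 2\<rfloor>"
  using D_10_22 D_22_31 unfolding sigma_def by auto
lemma s_20: "\<forall>n \<in> R 2 0. sigma n = \<lfloor>(phi - 1) * of_int n\<rfloor>"
  using Dall unfolding sigma_def U_20 by auto

lemma Rp1: "Rperm sigma"
  unfolding Rperm_def
proof
  show "bij_betw sigma {1..} {1..}" using bij_sig[of 1] by simp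
  show "\<exists>ps :: ((nat \<times> int) \<times> (int \<times> int \<times> int)) list.
        Rpartition (map fst ps) \<and>
        (\<forall>((i,j),(a,b,c)) \<in> set ps. \<forall>n \<in> R i j.
            sigma n = \<lfloor>(of_int a * phi + of_int b) * of_int n + of_int c\<rfloor>)"
    apply (rule exI[of _ "[((1,0),(1,1,-2)), ((3,1),(1,0,2)), ((2,2),(1,-1,2)), ((2,0),(1,-1,0))]"])
    using part1 s_10 s_31 s_22 s_20 by (simp add: algebra_simps)
qed

lemma Rp2: "Rperm (sigma ^^ 2)"
  unfolding Rperm_def
proof
  show "bij_betw (sigma ^^ 2) {1..} {1..}" using bij_sig[of 2] by simp
  show "\<exists>ps :: ((nat \<times> int) \<times> (int \<times> int \<times> int)) list.
        Rpartition (map fst ps) \<and>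
        (\<forall>((i,j),(a,b,c)) \<in> set ps. \<forall>n \<in> R i j.
            (sigma ^^ 2) n = \<lfloor>(of_int a * phi + of_int b) * of_int n + of_int c\<rfloor>)"
    apply (rule exI[of _ "[((2,2),(1,0,2)), ((1,0),(1,0,-2)), ((4,0),(0,1,0)), ((3,1),(0,1,0)), ((3,2),(-1,2,1))]"])
    using part2 c2_22 c2_10 i2b_ABB i2b_AAB c2_32 by simp
qed

lemma Rp3: "Rperm (sigma ^^ 3)"
  unfolding Rperm_def
proof
  show "bij_betw (sigma ^^ 3) {1..} {1..}" using bij_sig[of 3] by simp
  show "\<exists>ps :: ((nat \<times> int) \<times> (int \<times> int \<times> int)) list.
        Rpartition (map fst ps) \<and>
        (\<forall>((i,j),(a,b,c)) \<in> set ps. \<forall>n \<in> R i j.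
            (sigma ^^ 3) n = \<lfloor>(of_int a * phi + of_int b) * of_int n + of_int c\<rfloor>)"
    apply (rule exI[of _ "[((3,1),(1,0,2)), ((4,0),(1,-1,0)), ((3,2),(0,1,0)), ((2,2),(0,1,0)), ((1,0),(0,1,0))]"])
    using part3 c3_31 c3_40 i3_ABA i3_AAA i3_B by simp
qed

lemma Rp4: "Rperm (sigma ^^ 4)"
  unfolding Rperm_def
proof
  show "bij_betw (sigma ^^ 4) {1..} {1..}" using bij_sig[of 4] by simp
  show "\<exists>ps :: ((nat \<times> int) \<times> (int \<times> int \<times> int)) list.
        Rpartition (map fst ps) \<and>
        (\<forall>((i,j),(a,b,c)) \<in> set ps. \<forall>n \<in> R i j.
            (sigma ^^ 4) n = \<lfloor>(of_int a * phi + of_int b) * of_int n + of_int c\<rfloor>)"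
    apply (rule exI[of _ "[((1,0),(1,1,-2)), ((2,2),(1,-1,2)), ((3,2),(1,-1,0)), ((4,0),(0,1,0)), ((3,1),(0,1,0))]"])
    using part4 c4_10 c4_22 c4_32 i4_ABB i4_AAB by simp
qed

lemma Rp5: "Rperm (sigma ^^ 5)"
  unfolding Rperm_def
proof
  show "bij_betw (sigma ^^ 5) {1..} {1..}" using bij_sig[of 5] by simp
  show "\<exists>ps :: ((nat \<times> int) \<times> (int \<times> int \<times> int)) list.
        Rpartition (map fst ps) \<and>
        (\<forall>((i,j),(a,b,c)) \<in> set ps. \<forall>n \<in> R i j.
            (sigma ^^ 5) n = \<lfloor>(of_int a * phi + of_int b) * of_int n + of_int c\<rfloor>)"
    apply (rule exI[of _ "[((1,1),(1,0,2)), ((1,0),(1,0,-2)), ((4,0),(1,-1,0)), ((3,2),(-1,2,1))]"])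
    using part5 c5_11 c5_10 c5_40 c5_32 by simp
qed

lemma nonid: "\<forall>k \<in> {1..5::nat}. \<exists>n::int. n \<ge> 1 \<and> (sigma ^^ k) n \<noteq> n"
proof
  fix k :: nat assume "k \<in> {1..5}"
  hence "k = 1 \<or> k = 2 \<or> k = 3 \<or> k = 4 \<or> k = 5" by auto
  moreover have "(sigma ^^ 1) (Bf 1) \<noteq> Bf 1" by simp
  moreover have "(sigma ^^ 2) (Bf 1) \<noteq> Bf 1" unfolding pw by simp
  moreover have "(sigma ^^ 3) (Af (Af (Bf 1))) \<noteq> Af (Af (Bf 1))" unfolding pw by simp
  moreover have "(sigma ^^ 4) (Bf 1) \<noteq> Bf 1" unfolding pw by simp
  moreover have "(sigma ^^ 5) (Bf 1) \<noteq> Bf 1" unfolding pw by simp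
  moreover have "Bf 1 \<ge> 1" "Af (Af (Bf 1)) \<ge> 1" by simp_all
  ultimately show "\<exists>n::int. n \<ge> 1 \<and> (sigma ^^ k) n \<noteq> n" by metis
qed

lemma Af_val: "Af 1 = 1" "Af 2 = 3" "Af 3 = 4" "Af 4 = 6"
  unfolding Af_def using phi_bounds by (simp_all add: floor_eq_iff)

lemma sigC_B: "k \<ge> 1 \<Longrightarrow> sigma (Af k + k) = 3 * Af k + 2 * k - 2"
  using sig_B[of k] cf_ABA[of k] unfolding Bf_def by simp
lemma sigC_AAA: "k \<ge> 1 \<Longrightarrow> sigma (2 * Af k + k - 2) = Af k + k"
  using sig_AAA[of k] cf_AAA[of k] unfolding Bf_def by simp
lemma sigC_AAB: "k \<ge> 1 \<Longrightarrow> sigma (3 * Af k + 2 * k - 1) = 5 * Af k + 3 * k"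
  using sig_AAB[of k] cf_AAB[of k] cf_ABB[of k] by simp
lemma sigC_AB: "k \<ge> 1 \<Longrightarrow> sigma (2 * Af k + k) = Af k + k - 1"
  using sig_AB[of k] cf_AB[of k] cf_AA[of k] by simp

lemma vals: "map sigma [1..10] = [2,3,1,8,11,5,16,4,7,24]"
proof -
  have "[1..10::int] = [1,2,3,4,5,6,7,8,9,10]" by (simp add: upto.simps)
  moreover have "sigma 1 = 2" using sigC_AAA[of 1] Af_val by simp
  moreover have "sigma 2 = 3" using sigC_B[of 1] Af_val by simp
  moreover have "sigma 3 = 1" using sigC_AB[of 1] Af_val by simp
  moreover have "sigma 4 = 8" using sigC_AAB[of 1] Af_val by simp
  moreover have "sigma 5 = 11" using sigC_B[of 2] Af_val by simp
  moreover have "sigma 6 = 5" using sigC_AAA[of 2] Af_val by simp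
  moreover have "sigma 7 = 16" using sigC_B[of 3] Af_val by simp
  moreover have "sigma 8 = 4" using sigC_AB[of 2] Af_val by simp
  moreover have "sigma 9 = 7" using sigC_AAA[of 3] Af_val by simp
  moreover have "sigma 10 = 24" using sigC_B[of 4] Af_val by simp
  ultimately show ?thesis by simp
qed

lemma inv5: "\<forall>n::int. n \<ge> 1 \<longrightarrow> sigma ((sigma ^^ 5) n) = n \<and> (sigma ^^ 5) (sigma n) = n"
  using sig6 unfolding pw by simp

lemma u2: "\<forall>n \<in> R 4 0 \<union> R 3 1. (sigma ^^ 2) n = n" using i2b_ABB i2b_AAB by blast
lemma u3: "\<forall>n \<in> R 3 2 \<union> R 2 2 \<union> R 1 0. (sigma ^^ 3) n = n" using i3_ABA i3_AAA i3_B by blast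
lemma u4: "\<forall>n \<in> R 4 0 \<union> R 3 1. (sigma ^^ 4) n = n" using i4_ABB i4_AAB by blast
lemma s6: "\<forall>n::int. n \<ge> 1 \<longrightarrow> (sigma ^^ 6) n = n" using sig6 by blast

theorem theorem4p4:
  shows
  "Rpartition [(1,0),(3,1),(2,2),(2,0)] \<and> Rperm sigma \<and>
   (\<forall>n::int. n \<ge> 1 \<longrightarrow> (sigma ^^ 6) n = n) \<and>
   (\<forall>k \<in> {1..5::nat}. \<exists>n::int. n \<ge> 1 \<and> (sigma ^^ k) n \<noteq> n) \<and>
   map sigma [1..10] = [2,3,1,8,11,5,16,4,7,24] \<and>
   \<comment> \<open>sigma^2\<close>
   Rperm (sigma ^^ 2) \<and> Rpartition [(2,2),(1,0),(4,0),(3,1),(3,2)] \<and>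
   (\<forall>n \<in> R 2 2. (sigma ^^ 2) n = \<lfloor>phi * n + 2\<rfloor>) \<and>
   (\<forall>n \<in> R 1 0. (sigma ^^ 2) n = \<lfloor>phi * n - 2\<rfloor>) \<and>
   (\<forall>n \<in> R 4 0 \<union> R 3 1. (sigma ^^ 2) n = n) \<and>
   (\<forall>n \<in> R 3 2. (sigma ^^ 2) n = \<lfloor>(2 - phi) * n + 1\<rfloor>) \<and>
   \<comment> \<open>sigma^3\<close>
   Rperm (sigma ^^ 3) \<and> Rpartition [(3,1),(4,0),(3,2),(2,2),(1,0)] \<and>
   (\<forall>n \<in> R 3 1. (sigma ^^ 3) n = \<lfloor>phi * n + 2\<rfloor>) \<and>
   (\<forall>n \<in> R 4 0. (sigma ^^ 3) n = \<lfloor>(phi - 1) * n\<rfloor>) \<and>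
   (\<forall>n \<in> R 3 2 \<union> R 2 2 \<union> R 1 0. (sigma ^^ 3) n = n) \<and>
   \<comment> \<open>sigma^4\<close>
   Rperm (sigma ^^ 4) \<and> Rpartition [(1,0),(2,2),(3,2),(4,0),(3,1)] \<and>
   (\<forall>n \<in> R 1 0. (sigma ^^ 4) n = \<lfloor>(phi + 1) * n - 2\<rfloor>) \<and>
   (\<forall>n \<in> R 2 2. (sigma ^^ 4) n = \<lfloor>(phi - 1) * n + 2\<rfloor>) \<and>
   (\<forall>n \<in> R 3 2. (sigma ^^ 4) n = \<lfloor>(phi - 1) * n\<rfloor>) \<and>
   (\<forall>n \<in> R 4 0 \<union> R 3 1. (sigma ^^ 4) n = n) \<and>
   \<comment> \<open>sigma^5 = sigma^-1\<close>
   Rperm (sigma ^^ 5) \<and> Rpartition [(1,1),(1,0),(4,0),(3,2)] \<and>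
   (\<forall>n::int. n \<ge> 1 \<longrightarrow> sigma ((sigma ^^ 5) n) = n \<and> (sigma ^^ 5) (sigma n) = n) \<and>
   (\<forall>n \<in> R 1 1. (sigma ^^ 5) n = \<lfloor>phi * n + 2\<rfloor>) \<and>
   (\<forall>n \<in> R 1 0. (sigma ^^ 5) n = \<lfloor>phi * n - 2\<rfloor>) \<and>
   (\<forall>n \<in> R 4 0. (sigma ^^ 5) n = \<lfloor>(phi - 1) * n\<rfloor>) \<and>
   (\<forall>n \<in> R 3 2. (sigma ^^ 5) n = \<lfloor>(2 - phi) * n + 1\<rfloor>)"
    by (intro conjI part1 Rp1 s6 nonid vals Rp2 part2 c2_22 c2_10 u2 c2_32
      Rp3 part3 c3_31 c3_40 u3 Rp4 part4 c4_10 c4_22 c4_32 u4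
      Rp5 part5 inv5 c5_11 c5_10 c5_40 c5_32)

end
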